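(* Let $\mathbb X$ and $\mathbb Y$ be bounded domains in $\mathbb C$ and let $\Phi$ be a positive continuous weight on $\mathbb Y$. Suppose $h\colon\mathbb X\to\mathbb Y$ and $H\colon\mathbb X\to\mathbb Y$ are orientation-preserving $C^\infty$-diffeomorphisms onto $\mathbb Y$ with finite $\Phi$-weighted Dirichlet energy, and set $f:=H^{-1}\circ h\colon\mathbb X\to\mathbb X$. Then \[ \mathscr E^\Phi_{\mathbb X}[H]-\mathscr E^\Phi_{\mathbb X}[h]=4\int_{\mathbb X}\left[\frac{|f_z-\gamma(z)f_{\bar z}|^2}{|f_z|^2-|f_{\bar z}|^2}-1\right]\Phi(h)|h_zh_{\bar z}|\,dz+4\int_{\mathbb X}\Phi(h)\frac{(|h_z|-|h_{\bar z}|)^2|f_{\bar z}|^2}{|f_z|^2-|f_{\bar z}|^2}\,dz, \] where $\gamma(z)=h_z\overline{h_{\bar z}}\,|h_z\overline{h_{\bar z}}|^{-1}$ if $h_zh_{\bar z}\neq0$ and $\gamma(z)=0$ otherwise; moreover, the integrals on the right-hand side converge.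
   Context: For a map $g\colon\mathbb X\to\mathbb Y$ the $\Phi$-weighted Dirichlet energy is $\mathscr E^\Phi_{\mathbb X}[g]=\int_{\mathbb X}\Phi(g(z))\|Dg(z)\|^2\,dz$, where $\|Dg\|$ is the Hilbert–Schmidt norm (so $\|Dg\|^2=2(|g_z|^2+|g_{\bar z}|^2)$). Here $g_z,g_{\bar z}$ denote the complex (Wirtinger) derivatives. *)

theory Defs
  imports "HOL-Analysis.Analysis"
begin

definition Dg :: "(complex \<Rightarrow> complex) \<Rightarrow> complex \<Rightarrow> complex \<Rightarrow> complex" where
  "Dg g z v = frechet_derivative g (at z) v"

definition wz :: "(complex \<Rightarrow> complex) \<Rightarrow> complex \<Rightarrow> complex" where
  "wz g z = (Dg g z 1 - \<i> * Dg g z \<i>) / 2"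

definition wzbar :: "(complex \<Rightarrow> complex) \<Rightarrow> complex \<Rightarrow> complex" where
  "wzbar g z = (Dg g z 1 + \<i> * Dg g z \<i>) / 2"

definition hs_sq :: "(complex \<Rightarrow> complex) \<Rightarrow> complex \<Rightarrow> real" where
  "hs_sq g z = (cmod (Dg g z 1))\<^sup>2 + (cmod (Dg g z \<i>))\<^sup>2"

definition jac :: "(complex \<Rightarrow> complex) \<Rightarrow> complex \<Rightarrow> real" where
  "jac g z = Re (Dg g z 1) * Im (Dg g z \<i>) - Im (Dg g z 1) * Re (Dg g z \<i>)"

fun Ck_on :: "nat \<Rightarrow> complex set \<Rightarrow> (complex \<Rightarrow> complex) \<Rightarrow> bool" where
  "Ck_on 0 S g = continuous_on S g"
| "Ck_on (Suc k) S g = (g differentiable_on S \<and> (\<forall>v. Ck_on k S (\<lambda>z. Dg g z v)))"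

definition smooth_on :: "complex set \<Rightarrow> (complex \<Rightarrow> complex) \<Rightarrow> bool" where
  "smooth_on S g = (\<forall>k. Ck_on k S g)"

definition op_diffeo :: "complex set \<Rightarrow> complex set \<Rightarrow> (complex \<Rightarrow> complex) \<Rightarrow> bool" where
  "op_diffeo X Y g = (bij_betw g X Y \<and> smooth_on X g \<and> smooth_on Y (inv_into X g)
       \<and> (\<forall>z\<in>X. jac g z > 0))"

definition domain :: "complex set \<Rightarrow> bool" where
  "domain S = (open S \<and> connected S \<and> S \<noteq> {})"

definition energy :: "(complex \<Rightarrow> real) \<Rightarrow> complex set \<Rightarrow> (complex \<Rightarrow> complex) \<Rightarrow> real" where
  "energy \<Phi> X g = (LINT z:X|lborel. \<Phi> (g z) * hs_sq g z)"

definition finite_energy :: "(complex \<Rightarrow> real) \<Rightarrow> complex set \<Rightarrow> (complex \<Rightarrow> complex) \<Rightarrow> bool" where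
  "finite_energy \<Phi> X g = set_integrable lborel X (\<lambda>z. \<Phi> (g z) * hs_sq g z)"

definition gam :: "(complex \<Rightarrow> complex) \<Rightarrow> complex \<Rightarrow> complex" where
  "gam h z = (if wz h z * wzbar h z \<noteq> 0
      then wz h z * cnj (wzbar h z) / complex_of_real (cmod (wz h z * cnj (wzbar h z)))
      else 0)"

end

theory Submission
  imports Defs
begin

definition e2 :: "complex \<Rightarrow> real^2" where "e2 z = vector [Re z, Im z]"
definition ie2 :: "real^2 \<Rightarrow> complex" where "ie2 y = Complex (y$1) (y$2)"

lemma e2_nth1[simp]: "e2 z $ 1 = Re z" and e2_nth2[simp]: "e2 z $ 2 = Im z"
  by (simp_all add: e2_def)

lemma ie2_e2[simp]: "ie2 (e2 z) = z" by (simp add: ie2_def complex_eq_iff)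
lemma e2_ie2[simp]: "e2 (ie2 y) = y"
  unfolding ie2_def by (simp add: vec_eq_iff forall_2)

lemma linear_e2: "linear e2"
  by (rule linearI) (simp_all add: vec_eq_iff forall_2)
lemma linear_ie2: "linear ie2"
  by (rule linearI) (simp_all add: ie2_def complex_eq_iff)

lemma bounded_linear_e2: "bounded_linear e2" using linear_e2 linear_conv_bounded_linear by blast
lemma bounded_linear_ie2: "bounded_linear ie2" using linear_ie2 linear_conv_bounded_linear by blast

lemma e2_meas[measurable]: "e2 \<in> borel_measurable borel"
  using bounded_linear_e2 by (simp add: borel_measurable_continuous_onI linear_continuous_on)
lemma ie2_meas[measurable]: "ie2 \<in> borel_measurable borel"
  using bounded_linear_ie2 by (simp add: borel_measurable_continuous_onI linear_continuous_on)

lemma prod_Basis_2: "(\<Prod>b\<in>(Basis::(real^2) set). g b) = g (axis 1 1) * g (axis 2 1)"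
proof -
  have "(Basis::(real^2) set) = {axis 1 1, axis 2 1}"
    by (auto simp: Basis_vec_def UNIV_2)
  then have "(\<Prod>b\<in>(Basis::(real^2) set). g b) = (\<Prod>b\<in>{axis 1 1, axis 2 1}. g b)" by simp
  moreover have "axis 1 (1::real) \<noteq> (axis 2 1 :: real^2)"
    by (simp add: axis_eq_axis)
  ultimately show ?thesis by simp
qed

lemma distr_e2: "distr lborel borel e2 = lborel"
proof (rule lborel_eqI[symmetric])
  fix l u :: "real^2"
  assume le: "\<And>b. b \<in> Basis \<Longrightarrow> l \<bullet> b \<le> u \<bullet> b"
  have pre: "e2 -` box l u = box (ie2 l) (ie2 u)"
    by (auto simp: mem_box_cart in_box_complex_iff ie2_def forall_2)
  have "l $ 1 \<le> u $ 1" "l $ 2 \<le> u $ 2" using le[of "axis 1 1"] le[of "axis 2 1"]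
    by (auto simp: Basis_vec_def inner_axis)
  then show "emeasure (distr lborel borel e2) (box l u) = (\<Prod>b\<in>Basis. (u - l) \<bullet> b)"
    by (simp add: emeasure_distr pre emeasure_lborel_box_eq prod_Basis_2 Basis_complex_def
        inner_axis ie2_def)
qed simp

lemma cov_real2:
  fixes f :: "real^2 \<Rightarrow> real" and g :: "real^2 \<Rightarrow> real^2"
  assumes S: "S \<in> sets lebesgue"
    and der_g: "\<And>x. x \<in> S \<Longrightarrow> (g has_derivative g' x) (at x within S)"
    and inj: "inj_on g S"
  shows "(\<lambda>x. \<bar>det (matrix (g' x))\<bar> * f (g x)) absolutely_integrable_on S \<and>
           integral S (\<lambda>x. \<bar>det (matrix (g' x))\<bar> * f (g x)) = b
     \<longleftrightarrow> f absolutely_integrable_on (g ` S) \<and> integral (g ` S) f = b"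
proof -
  have "(\<lambda>x. \<bar>det (matrix (g' x))\<bar> *\<^sub>R vec (f(g x)) :: real ^ 1) absolutely_integrable_on S \<and>
           integral S (\<lambda>x. \<bar>det (matrix (g' x))\<bar> *\<^sub>R vec (f(g x))) = (vec b :: real ^ 1)
         \<longleftrightarrow> (\<lambda>x. vec (f x) :: real ^ 1) absolutely_integrable_on (g ` S) \<and>
           integral (g ` S) (\<lambda>x. vec (f x)) = (vec b :: real ^ 1)"
    by (rule has_absolute_integral_change_of_variables[OF S der_g inj])
  thus ?thesis
    by (simp add: absolutely_integrable_on_1_iff integral_on_1_eq)
qed

lemma integrable_e2:
  fixes G :: "real^2 \<Rightarrow> real"
  assumes [measurable]: "G \<in> borel_measurable borel"
  shows "integrable lborel G \<longleftrightarrow> integrable lborel (\<lambda>z. G (e2 z))"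
    and "integral\<^sup>L lborel G = integral\<^sup>L lborel (\<lambda>z. G (e2 z))"
proof -
  show "integrable lborel G \<longleftrightarrow> integrable lborel (\<lambda>z. G (e2 z))"
    by (subst distr_e2[symmetric]) (rule integrable_distr_eq; simp)
  show "integral\<^sup>L lborel G = integral\<^sup>L lborel (\<lambda>z. G (e2 z))"
    by (subst distr_e2[symmetric]) (rule integral_distr; simp)
qed

lemma set_integrable_e2:
  fixes F :: "complex \<Rightarrow> real"
  assumes m: "(\<lambda>z. indicator S z * F z) \<in> borel_measurable borel"
  shows "set_integrable lborel S F \<longleftrightarrow> (\<lambda>y. F (ie2 y)) absolutely_integrable_on (ie2 -` S)"
    and "set_integrable lborel S F \<Longrightarrow> (LINT z:S|lborel. F z) = integral (ie2 -` S) (\<lambda>y. F (ie2 y))"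
proof -
  define G where "G y = indicator S (ie2 y) * F (ie2 y)" for y
  have Gm[measurable]: "G \<in> borel_measurable borel"
    unfolding G_def using m by (rule measurable_compose[rotated]) simp
  have GG: "(\<lambda>y. indicator (ie2 -` S) y *\<^sub>R F (ie2 y)) = G"
    by (auto simp: G_def indicator_def)
  have Ge: "(\<lambda>z. G (e2 z)) = (\<lambda>z. indicator S z *\<^sub>R F z)"
    by (simp add: G_def)
  have Gl: "Measurable.pred lborel (\<lambda>x. True)" by simp
  have Gm2: "G \<in> lborel \<rightarrow>\<^sub>M borel" using Gm by simp
  have eq1: "set_integrable lborel S F \<longleftrightarrow> integrable lborel G"
    unfolding set_integrable_def integrable_e2(1)[OF Gm] Ge ..
  have eq2: "(\<lambda>y. F (ie2 y)) absolutely_integrable_on (ie2 -` S) \<longleftrightarrow> integrable lborel G"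
    unfolding set_integrable_def GG integrable_completion[OF Gm2] ..
  show "set_integrable lborel S F \<longleftrightarrow> (\<lambda>y. F (ie2 y)) absolutely_integrable_on (ie2 -` S)"
    using eq1 eq2 by simp
  assume int: "set_integrable lborel S F"
  then have ai: "(\<lambda>y. F (ie2 y)) absolutely_integrable_on (ie2 -` S)" using eq1 eq2 by simp
  have "(LINT z:S|lborel. F z) = integral\<^sup>L lborel G"
    unfolding set_lebesgue_integral_def integrable_e2(2)[OF Gm] Ge ..
  also have "\<dots> = integral\<^sup>L lebesgue G"
    using integral_completion[OF Gm2] by simp
  also have "\<dots> = (LINT y:(ie2 -` S)|lebesgue. F (ie2 y))"
    unfolding set_lebesgue_integral_def GG ..
  also have "\<dots> = integral (ie2 -` S) (\<lambda>y. F (ie2 y))"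
    by (rule set_lebesgue_integral_eq_integral(2)[OF ai])
  finally show "(LINT z:S|lborel. F z) = integral (ie2 -` S) (\<lambda>y. F (ie2 y))" .
qed

definition jacL :: "(complex \<Rightarrow> complex) \<Rightarrow> real" where
  "jacL L = Re (L 1) * Im (L \<i>) - Im (L 1) * Re (L \<i>)"

lemma ie2_axis1[simp]: "ie2 (axis 1 1) = 1" by (simp add: ie2_def axis_def complex_eq_iff)
lemma ie2_axis2[simp]: "ie2 (axis 2 1) = \<i>" by (simp add: ie2_def axis_def complex_eq_iff)

lemma det_e2: "det (matrix (\<lambda>v. e2 (L (ie2 v)))) = jacL L"
  by (simp add: det_2 matrix_def jacL_def)

lemma cov_complex:
  fixes F :: "complex \<Rightarrow> real" and g :: "complex \<Rightarrow> complex"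
  assumes S: "S \<in> sets borel"
    and der: "\<And>x. x \<in> S \<Longrightarrow> (g has_derivative g' x) (at x within S)"
    and inj: "inj_on g S"
    and m1: "(\<lambda>z. indicator (g`S) z * F z) \<in> borel_measurable borel"
    and m2: "(\<lambda>z. indicator S z * (\<bar>jacL (g' z)\<bar> * F (g z))) \<in> borel_measurable borel"
    and int: "set_integrable lborel (g`S) F"
  shows "set_integrable lborel S (\<lambda>z. \<bar>jacL (g' z)\<bar> * F (g z))"
    and "(LINT z:S|lborel. \<bar>jacL (g' z)\<bar> * F (g z)) = (LINT z:(g`S)|lborel. F z)"
proof -
  define S2 where "S2 = ie2 -` S"
  define g2 where "g2 y = e2 (g (ie2 y))" for y
  define g2' where "g2' y = (\<lambda>v. e2 (g' (ie2 y) (ie2 v)))" for y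
  have S2: "S2 \<in> sets lebesgue" unfolding S2_def using S
    by (metis ie2_meas measurable_sets_borel sets_completionI_sets sets_lborel)
  have img: "ie2 -` (g`S) = g2 ` S2"
  proof
    show "ie2 -` g ` S \<subseteq> g2 ` S2"
    proof
      fix y assume "y \<in> ie2 -` g ` S"
      then obtain x where x: "x \<in> S" "ie2 y = g x" by auto
      then have "y = g2 (e2 x)" by (metis e2_ie2 g2_def ie2_e2)
      moreover have "e2 x \<in> S2" using x by (simp add: S2_def)
      ultimately show "y \<in> g2 ` S2" by blast
    qed
    show "g2 ` S2 \<subseteq> ie2 -` g ` S" by (auto simp: g2_def S2_def)
  qed
  have der2: "(g2 has_derivative g2' y) (at y within S2)" if y: "y \<in> S2" for y
  proof -
    have d1: "(ie2 has_derivative ie2) (at y within S2)"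
      by (rule bounded_linear_imp_has_derivative[OF bounded_linear_ie2])
    have d2: "(g has_derivative g' (ie2 y)) (at (ie2 y) within (ie2 ` S2))"
      using der[of "ie2 y"] y by (auto simp: S2_def intro: has_derivative_subset)
    have d3: "((\<lambda>x. g (ie2 x)) has_derivative (\<lambda>v. g' (ie2 y) (ie2 v))) (at y within S2)"
      by (rule has_derivative_in_compose[OF d1 d2])
    have d4: "(e2 has_derivative e2) (at (g (ie2 y)) within ((\<lambda>x. g (ie2 x)) ` S2))"
      by (rule bounded_linear_imp_has_derivative[OF bounded_linear_e2])
    show ?thesis unfolding g2_def g2'_def
      by (rule has_derivative_in_compose[OF d3 d4])
  qed
  have inj2: "inj_on g2 S2"
    using inj unfolding inj_on_def g2_def S2_def by (metis e2_ie2 ie2_e2 vimageE)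
  have ai: "(\<lambda>y. F (ie2 y)) absolutely_integrable_on (g2 ` S2)"
    using set_integrable_e2(1)[OF m1] int img by simp
  have iv: "(LINT z:(g`S)|lborel. F z) = integral (g2 ` S2) (\<lambda>y. F (ie2 y))"
    using set_integrable_e2(2)[OF m1 int] img by simp
  note cv = cov_real2[OF S2 der2 inj2, of "\<lambda>y. F (ie2 y)" "integral (g2 ` S2) (\<lambda>y. F (ie2 y))"]
  have dete: "det (matrix (g2' x)) = jacL (g' (ie2 x))" for x
    unfolding g2'_def by (rule det_e2)
  have ie2g2: "ie2 (g2 x) = g (ie2 x)" for x by (simp add: g2_def)
  have A: "(\<lambda>y. \<bar>jacL (g' (ie2 y))\<bar> * F (g (ie2 y))) absolutely_integrable_on S2"
    and B: "integral S2 (\<lambda>y. \<bar>jacL (g' (ie2 y))\<bar> * F (g (ie2 y))) = integral (g2 ` S2) (\<lambda>y. F (ie2 y))"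
    using cv ai by (simp_all add: dete ie2g2)
  show si: "set_integrable lborel S (\<lambda>z. \<bar>jacL (g' z)\<bar> * F (g z))"
    using set_integrable_e2(1)[OF m2] A by (simp add: S2_def)
  show "(LINT z:S|lborel. \<bar>jacL (g' z)\<bar> * F (g z)) = (LINT z:(g`S)|lborel. F z)"
    using set_integrable_e2(2)[OF m2 si] B iv by (simp add: S2_def)
qed

lemma sq_cmod_eq: "(cmod z)^2 = Re z ^2 + Im z ^2"
  by (simp add: cmod_def)

lemma algA:
  fixes a b c d p q :: complex
  assumes "a = p*c + q*cnj d" "b = p*d + q*cnj c"
  shows "((cmod c)^2 - (cmod d)^2)^2 * ((cmod p)^2 + (cmod q)^2)
     = ((cmod a)^2 + (cmod b)^2) * ((cmod c)^2 + (cmod d)^2) - 4 * Re (a * cnj b * cnj c * d)"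
  using assms unfolding sq_cmod_eq
  by (simp add: algebra_simps power2_eq_square)

lemma algC:
  fixes a b c d :: complex
  defines "\<gamma> \<equiv> (if a * b \<noteq> 0 then a * cnj b / complex_of_real (cmod (a * cnj b)) else 0)"
  shows "(cmod (c - \<gamma> * d))^2 * cmod (a*b) = ((cmod c)^2 + (cmod d)^2) * cmod (a*b) - 2 * Re (a * cnj b * cnj c * d)"
proof (cases "a * b = 0")
  case True
  then show ?thesis by auto
next
  case False
  define r where "r = cmod (a * b)"
  have r: "r > 0" using False by (simp add: r_def)
  have rr: "cmod (a * cnj b) = r" by (simp add: r_def norm_mult)
  have g: "\<gamma> = a * cnj b / of_real r" using False by (simp add: \<gamma>_def rr)
  have n1: "cmod \<gamma> = 1" using r unfolding g norm_divide rr by simp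
  have n: "(cmod \<gamma>)^2 = 1" using n1 by simp
  have "(cmod (c - \<gamma> * d))^2 = (cmod c)^2 + (cmod \<gamma>)^2 * (cmod d)^2 - 2 * Re (\<gamma> * d * cnj c)"
    unfolding sq_cmod_eq by (simp add: algebra_simps power2_eq_square)
  also have "\<dots> = (cmod c)^2 + (cmod d)^2 - 2 * Re (\<gamma> * d * cnj c)"
    using n by simp
  also have "Re (\<gamma> * d * cnj c) = Re (a * cnj b * cnj c * d) / r"
    unfolding g by (simp add: Re_divide_of_real mult.commute mult.left_commute)
  also have "(cmod c)^2 + (cmod d)^2 - 2 * (Re (a * cnj b * cnj c * d) / r) = (cmod c)^2 + (cmod d)^2 - 2 * Re (a * cnj b * cnj c * d) / r"
    by simp
  finally show ?thesis using r by (simp add: r_def[symmetric] field_simps)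
qed

lemma algMain:
  fixes a b c d p q :: complex and \<Phi> :: real
  defines "\<gamma> \<equiv> (if a * b \<noteq> 0 then a * cnj b / complex_of_real (cmod (a * cnj b)) else 0)"
  assumes J: "(cmod c)^2 - (cmod d)^2 > 0"
    and ab: "a = p*c + q*cnj d" "b = p*d + q*cnj c"
  shows "\<Phi> * ((cmod c)^2 - (cmod d)^2) * (2 * ((cmod p)^2 + (cmod q)^2)) - \<Phi> * (2 * ((cmod a)^2 + (cmod b)^2))
    = 4 * (((cmod (c - \<gamma> * d))^2 / ((cmod c)^2 - (cmod d)^2) - 1) * \<Phi> * cmod (a * b))
      + 4 * (\<Phi> * (cmod a - cmod b)^2 * (cmod d)^2 / ((cmod c)^2 - (cmod d)^2))"
proof -
  define JJ where "JJ = (cmod c)^2 - (cmod d)^2"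
  define R where "R = Re (a * cnj b * cnj c * d)"
  have J0: "JJ > 0" using J by (simp add: JJ_def)
  have A: "JJ^2 * ((cmod p)^2 + (cmod q)^2) = ((cmod a)^2 + (cmod b)^2) * ((cmod c)^2 + (cmod d)^2) - 4 * R"
    unfolding JJ_def R_def by (rule algA[OF ab])
  have C: "(cmod (c - \<gamma> * d))^2 * cmod (a*b) = ((cmod c)^2 + (cmod d)^2) * cmod (a*b) - 2 * R"
    unfolding R_def \<gamma>_def by (rule algC)
  have ab': "cmod (a*b) = cmod a * cmod b" by (simp add: norm_mult)
  have "JJ * (\<Phi> * JJ * (2 * ((cmod p)^2 + (cmod q)^2)) - \<Phi> * (2 * ((cmod a)^2 + (cmod b)^2)))
      = 2 * \<Phi> * (JJ^2 * ((cmod p)^2 + (cmod q)^2)) - 2 * \<Phi> * JJ * ((cmod a)^2 + (cmod b)^2)"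
    by (simp add: algebra_simps power2_eq_square)
  also have "\<dots> = 2 * \<Phi> * (((cmod a)^2 + (cmod b)^2) * ((cmod c)^2 + (cmod d)^2) - 4 * R) - 2 * \<Phi> * JJ * ((cmod a)^2 + (cmod b)^2)"
    by (simp only: A)
  also have "\<dots> = 4 * \<Phi> * (((cmod a)^2 + (cmod b)^2) * (cmod d)^2 - 2 * R)"
    unfolding JJ_def by (simp add: algebra_simps)
  also have "\<dots> = JJ * (4 * (((cmod (c - \<gamma> * d))^2 / JJ - 1) * \<Phi> * cmod (a * b))
      + 4 * (\<Phi> * (cmod a - cmod b)^2 * (cmod d)^2 / JJ))"
  proof -
    have "JJ * (4 * (((cmod (c - \<gamma> * d))^2 / JJ - 1) * \<Phi> * cmod (a * b))
      + 4 * (\<Phi> * (cmod a - cmod b)^2 * (cmod d)^2 / JJ))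
      = 4 * \<Phi> * ((cmod (c - \<gamma> * d))^2 * cmod (a*b) - JJ * cmod (a*b) + (cmod a - cmod b)^2 * (cmod d)^2)"
      using J0 by (simp add: field_simps)
    also have "\<dots> = 4 * \<Phi> * ((((cmod c)^2 + (cmod d)^2) * cmod (a*b) - 2 * R) - JJ * cmod (a*b) + (cmod a - cmod b)^2 * (cmod d)^2)"
      by (simp only: C)
    also have "\<dots> = 4 * \<Phi> * (((cmod a)^2 + (cmod b)^2) * (cmod d)^2 - 2 * R)"
      unfolding JJ_def ab' by (simp add: algebra_simps power2_eq_square)
    finally show ?thesis by simp
  qed
  finally show ?thesis using J0 unfolding JJ_def[symmetric] by simp
qed

definition czL :: "(complex \<Rightarrow> complex) \<Rightarrow> complex" where "czL L = (L 1 - \<i> * L \<i>) / 2"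
definition czbL :: "(complex \<Rightarrow> complex) \<Rightarrow> complex" where "czbL L = (L 1 + \<i> * L \<i>) / 2"
definition hsL :: "(complex \<Rightarrow> complex) \<Rightarrow> real" where "hsL L = (cmod (L 1))^2 + (cmod (L \<i>))^2"

lemma lin_rep:
  assumes "linear L"
  shows "L v = czL L * v + czbL L * cnj v"
proof -
  have "v = Re v *\<^sub>R 1 + Im v *\<^sub>R \<i>" by (simp add: complex_eq_iff)
  then have "L v = Re v *\<^sub>R L 1 + Im v *\<^sub>R L \<i>"
    by (metis assms linear_add linear_scale)
  then show ?thesis unfolding czL_def czbL_def
    by (simp add: complex_eq_iff field_simps scaleR_conv_of_real)
qed

lemma L1_eq: "linear L \<Longrightarrow> L 1 = czL L + czbL L"
  using lin_rep[of L 1] by simp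
lemma Li_eq: "linear L \<Longrightarrow> L \<i> = \<i> * (czL L - czbL L)"
  using lin_rep[of L \<i>] by (simp add: algebra_simps)

lemma hsL_eq: "linear L \<Longrightarrow> hsL L = 2 * ((cmod (czL L))^2 + (cmod (czbL L))^2)"
  unfolding hsL_def L1_eq Li_eq sq_cmod_eq by (simp add: algebra_simps power2_eq_square norm_mult)

lemma jacL_eq: "linear L \<Longrightarrow> jacL L = (cmod (czL L))^2 - (cmod (czbL L))^2"
  unfolding jacL_def L1_eq Li_eq sq_cmod_eq by (simp add: algebra_simps power2_eq_square)

lemma comp_cz:
  assumes "linear L" "linear M"
  shows "czL (\<lambda>v. L (M v)) = czL L * czL M + czbL L * cnj (czbL M)"
    and "czbL (\<lambda>v. L (M v)) = czL L * czbL M + czbL L * cnj (czL M)"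
proof -
  have e1: "L (M 1) = czL L * (czL M + czbL M) + czbL L * cnj (czL M + czbL M)"
    using lin_rep[OF assms(1), of "M 1"] L1_eq[OF assms(2)] by simp
  have e2: "L (M \<i>) = czL L * (\<i> * (czL M - czbL M)) + czbL L * cnj (\<i> * (czL M - czbL M))"
    using lin_rep[OF assms(1), of "M \<i>"] Li_eq[OF assms(2)] by simp
  show "czL (\<lambda>v. L (M v)) = czL L * czL M + czbL L * cnj (czbL M)"
    unfolding czL_def[of "\<lambda>v. L (M v)"] e1 e2 by (simp add: complex_eq_iff field_simps)
  show "czbL (\<lambda>v. L (M v)) = czL L * czbL M + czbL L * cnj (czL M)"
    unfolding czbL_def[of "\<lambda>v. L (M v)"] e1 e2 by (simp add: complex_eq_iff field_simps)
qed

lemma jac_comp: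
  assumes "linear L" "linear M"
  shows "jacL (\<lambda>v. L (M v)) = jacL L * jacL M"
proof -
  have lin: "linear (\<lambda>v. L (M v))" using assms linear_compose[of M L] by (simp add: o_def)
  show ?thesis
    unfolding jacL_eq[OF lin] jacL_eq[OF assms(1)] jacL_eq[OF assms(2)] comp_cz[OF assms] sq_cmod_eq
    by (simp add: algebra_simps power2_eq_square)
qed

lemma Dg_eq: "Dg g z = frechet_derivative g (at z)"
  by (rule ext) (simp add: Dg_def)

lemma wz_eq: "wz g z = czL (Dg g z)" by (simp add: wz_def czL_def)
lemma wzbar_eq: "wzbar g z = czbL (Dg g z)" by (simp add: wzbar_def czbL_def)
lemma hs_eq: "hs_sq g z = hsL (Dg g z)" by (simp add: hs_sq_def hsL_def)
lemma jac_eq: "jac g z = jacL (Dg g z)" by (simp add: jac_def jacL_def)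

lemma smooth_C1:
  assumes "smooth_on S g"
  shows "g differentiable_on S" "\<And>v. continuous_on S (\<lambda>z. Dg g z v)" "continuous_on S g"
proof -
  have "Ck_on (Suc 0) S g" "Ck_on 0 S g" using assms by (auto simp: smooth_on_def)
  then show "g differentiable_on S" "\<And>v. continuous_on S (\<lambda>z. Dg g z v)" "continuous_on S g"
    by auto
qed

lemma deriv_at:
  assumes "open S" "g differentiable_on S" "z \<in> S"
  shows "(g has_derivative Dg g z) (at z)"
proof -
  have "g differentiable at z" using assms
    by (metis at_within_open differentiable_on_def)
  then show ?thesis unfolding Dg_eq by (simp add: frechet_derivative_works)
qed

lemma cont_eqI: "continuous_on S g \<Longrightarrow> (\<And>x. x \<in> S \<Longrightarrow> f x = g x) \<Longrightarrow> continuous_on S f"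
  using continuous_on_cong by blast

theorem lemma2p1:
  fixes X Y :: "complex set" and \<Phi> :: "complex \<Rightarrow> real" and h H :: "complex \<Rightarrow> complex"
  assumes "domain X" "bounded X" "domain Y" "bounded Y"
    and "continuous_on Y \<Phi>" "\<forall>w\<in>Y. \<Phi> w > 0"
    and "op_diffeo X Y h" "op_diffeo X Y H"
    and "finite_energy \<Phi> X h" "finite_energy \<Phi> X H"
  defines "f \<equiv> inv_into X H \<circ> h"
  shows "set_integrable lborel X (\<lambda>z.
           ((cmod (wz f z - gam h z * wzbar f z))\<^sup>2 / ((cmod (wz f z))\<^sup>2 - (cmod (wzbar f z))\<^sup>2) - 1)
             * \<Phi> (h z) * cmod (wz h z * wzbar h z)) \<and>
         set_integrable lborel X (\<lambda>z.
           \<Phi> (h z) * (cmod (wz h z) - cmod (wzbar h z))\<^sup>2 * (cmod (wzbar f z))\<^sup>2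
             / ((cmod (wz f z))\<^sup>2 - (cmod (wzbar f z))\<^sup>2)) \<and>
         energy \<Phi> X H - energy \<Phi> X h =
           4 * (LINT z:X|lborel.
              ((cmod (wz f z - gam h z * wzbar f z))\<^sup>2 / ((cmod (wz f z))\<^sup>2 - (cmod (wzbar f z))\<^sup>2) - 1)
                * \<Phi> (h z) * cmod (wz h z * wzbar h z))
         + 4 * (LINT z:X|lborel.
              \<Phi> (h z) * (cmod (wz h z) - cmod (wzbar h z))\<^sup>2 * (cmod (wzbar f z))\<^sup>2
                / ((cmod (wz f z))\<^sup>2 - (cmod (wzbar f z))\<^sup>2))"
proof -
  define Hi where "Hi = inv_into X H"
  have oX: "open X" and oY: "open Y" using assms(1,3) by (auto simp: domain_def)
  have Xb: "X \<in> sets borel" using oX by simp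
  have bh: "bij_betw h X Y" and sh: "smooth_on X h" and jh: "\<forall>z\<in>X. jac h z > 0"
    using assms(7) by (auto simp: op_diffeo_def)
  have bH: "bij_betw H X Y" and sH: "smooth_on X H" and sHi: "smooth_on Y Hi"
    and jH: "\<forall>z\<in>X. jac H z > 0"
    using assms(8) by (auto simp: op_diffeo_def Hi_def)
  have PhiY: "continuous_on Y \<Phi>" and Phipos: "\<And>w. w \<in> Y \<Longrightarrow> \<Phi> w > 0" using assms(5,6) by auto
  have hY: "h z \<in> Y" if "z \<in> X" for z using bh that by (auto simp: bij_betw_def)
  have bHi: "bij_betw Hi Y X" unfolding Hi_def by (rule bij_betw_inv_into[OF bH])
  have HiY: "Hi w \<in> X" if "w \<in> Y" for w using bHi that by (auto simp: bij_betw_def)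
  have HHi: "H (Hi w) = w" if "w \<in> Y" for w
    using bH that unfolding Hi_def bij_betw_def by (auto intro: f_inv_into_f)
  have fz: "f z = Hi (h z)" for z by (simp add: f_def Hi_def)
  have fX: "f z \<in> X" if "z \<in> X" for z using that by (simp add: fz HiY hY)
  have Hf: "H (f z) = h z" if "z \<in> X" for z using that by (simp add: fz HHi hY)
  have bf: "bij_betw f X X" unfolding f_def Hi_def[symmetric] by (rule bij_betw_trans[OF bh bHi])
  have fXX: "f ` X = X" and injf: "inj_on f X" using bf by (auto simp: bij_betw_def)
  note h1 = smooth_C1[OF sh] and H1 = smooth_C1[OF sH] and Hi1 = smooth_C1[OF sHi]
  have dh: "(h has_derivative Dg h z) (at z)" if "z \<in> X" for z by (rule deriv_at[OF oX h1(1) that])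
  have dH: "(H has_derivative Dg H z) (at z)" if "z \<in> X" for z by (rule deriv_at[OF oX H1(1) that])
  have dHi: "(Hi has_derivative Dg Hi w) (at w)" if "w \<in> Y" for w by (rule deriv_at[OF oY Hi1(1) that])
  have df0: "(f has_derivative (Dg Hi (h z) \<circ> Dg h z)) (at z)" if "z \<in> X" for z
    unfolding f_def Hi_def[symmetric] by (rule diff_chain_at[OF dh[OF that] dHi[OF hY[OF that]]])
  have Dgf: "Dg f z = Dg Hi (h z) \<circ> Dg h z" if "z \<in> X" for z
    using frechet_derivative_at[OF df0[OF that]] by (simp add: Dg_eq)
  have df: "(f has_derivative Dg f z) (at z)" if "z \<in> X" for z
    using df0[OF that] Dgf[OF that] by simp
  have dHf: "((H \<circ> f) has_derivative (Dg H (f z) \<circ> Dg f z)) (at z)" if "z \<in> X" for z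
    by (rule diff_chain_at[OF df[OF that] dH[OF fX[OF that]]])
  have dh2: "(h has_derivative (Dg H (f z) \<circ> Dg f z)) (at z)" if "z \<in> X" for z
    by (rule has_derivative_transform_within_open[OF dHf[OF that] oX that]) (simp add: Hf)
  have Dgh: "Dg h z = (\<lambda>v. Dg H (f z) (Dg f z v))" if "z \<in> X" for z
    using has_derivative_unique[OF dh[OF that] dh2[OF that]] by (simp add: o_def)
  have linh: "linear (Dg h z)" if "z \<in> X" for z using dh[OF that] by (rule has_derivative_linear)
  have linf: "linear (Dg f z)" if "z \<in> X" for z using df[OF that] by (rule has_derivative_linear)
  have linH: "linear (Dg H z)" if "z \<in> X" for z using dH[OF that] by (rule has_derivative_linear)
  have linHi: "linear (Dg Hi w)" if "w \<in> Y" for w using dHi[OF that] by (rule has_derivative_linear)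
  have relA: "wz h z = wz H (f z) * wz f z + wzbar H (f z) * cnj (wzbar f z)"
    and relB: "wzbar h z = wz H (f z) * wzbar f z + wzbar H (f z) * cnj (wz f z)"
    if "z \<in> X" for z
    unfolding wz_eq wzbar_eq Dgh[OF that] comp_cz[OF linH[OF fX[OF that]] linf[OF that]] by simp_all
  have Jeq: "jac f z = (cmod (wz f z))^2 - (cmod (wzbar f z))^2" if "z \<in> X" for z
    unfolding jac_eq wz_eq wzbar_eq by (rule jacL_eq[OF linf[OF that]])
  have jf: "jac f z > 0" if "z \<in> X" for z
  proof -
    have "jac h z = jac H (f z) * jac f z"
      unfolding jac_eq Dgh[OF that] by (rule jac_comp[OF linH[OF fX[OF that]] linf[OF that]])
    then show ?thesis using jh jH that fX[OF that] by (metis zero_less_mult_pos)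
  qed
  have hsHf: "hs_sq H (f z) = 2 * ((cmod (wz H (f z)))^2 + (cmod (wzbar H (f z)))^2)" if "z \<in> X" for z
    unfolding hs_eq wz_eq wzbar_eq by (rule hsL_eq[OF linH[OF fX[OF that]]])
  have hsh: "hs_sq h z = 2 * ((cmod (wz h z))^2 + (cmod (wzbar h z))^2)" if "z \<in> X" for z
    unfolding hs_eq wz_eq wzbar_eq by (rule hsL_eq[OF linh[OF that]])
  define F where "F w = \<Phi> (H w) * hs_sq H w" for w
  define P1 where "P1 z = \<bar>jacL (Dg f z)\<bar> * F (f z)" for z
  define G where "G z = \<Phi> (h z) * hs_sq h z" for z
  define T1 where "T1 z = ((cmod (wz f z - gam h z * wzbar f z))\<^sup>2 / ((cmod (wz f z))\<^sup>2 - (cmod (wzbar f z))\<^sup>2) - 1)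
             * \<Phi> (h z) * cmod (wz h z * wzbar h z)" for z
  define T2 where "T2 z = \<Phi> (h z) * (cmod (wz h z) - cmod (wzbar h z))\<^sup>2 * (cmod (wzbar f z))\<^sup>2
             / ((cmod (wz f z))\<^sup>2 - (cmod (wzbar f z))\<^sup>2)" for z
  define K where "K z = \<Phi> (h z) * cmod (wz h z * wzbar h z)" for z
  have pw: "P1 z - G z = 4 * T1 z + 4 * T2 z" if z: "z \<in> X" for z
  proof -
    have "P1 z = \<Phi> (h z) * ((cmod (wz f z))^2 - (cmod (wzbar f z))^2) * (2 * ((cmod (wz H (f z)))^2 + (cmod (wzbar H (f z)))^2))"
    proof -
      have "jacL (Dg f z) = (cmod (wz f z))^2 - (cmod (wzbar f z))^2" "jacL (Dg f z) > 0"
        using jf[OF z] Jeq[OF z] by (simp_all add: jac_eq)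
      then have "\<bar>jacL (Dg f z)\<bar> = (cmod (wz f z))^2 - (cmod (wzbar f z))^2" by simp
      then show ?thesis unfolding P1_def F_def using Hf[OF z] hsHf[OF z] by (simp only:) (simp add: algebra_simps)
    qed
    moreover have "G z = \<Phi> (h z) * (2 * ((cmod (wz h z))^2 + (cmod (wzbar h z))^2))"
      unfolding G_def hsh[OF z] ..
    moreover have J0: "(cmod (wz f z))^2 - (cmod (wzbar f z))^2 > 0" using jf[OF z] Jeq[OF z] by simp
    note E = algMain[where \<Phi>="\<Phi> (h z)", OF J0 relA[OF z] relB[OF z]]
    ultimately show ?thesis
      unfolding T1_def T2_def gam_def using E by (simp only:)
  qed
  have hXY: "h ` X \<subseteq> Y" using hY by auto
  have HXY: "H ` X \<subseteq> Y" using bH by (auto simp: bij_betw_def)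
  have fXsub: "f ` X \<subseteq> X" using fX by auto
  have cf: "continuous_on X f"
    by (rule continuous_at_imp_continuous_on) (use df has_derivative_continuous in blast)
  have cPh: "continuous_on X (\<lambda>z. \<Phi> (h z))" by (rule continuous_on_compose2[OF PhiY h1(3) hXY])
  have cPH: "continuous_on X (\<lambda>z. \<Phi> (H z))" by (rule continuous_on_compose2[OF PhiY H1(3) HXY])
  have cDh: "continuous_on X (\<lambda>z. Dg h z v)" for v by (rule h1(2))
  have cDH: "continuous_on X (\<lambda>z. Dg H z v)" for v by (rule H1(2))
  have cDHf: "continuous_on X (\<lambda>z. Dg H (f z) v)" for v by (rule continuous_on_compose2[OF H1(2) cf fXsub])
  have cDHih: "continuous_on X (\<lambda>z. Dg Hi (h z) v)" for v by (rule continuous_on_compose2[OF Hi1(2) h1(3) hXY])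
  have cDf: "continuous_on X (\<lambda>z. Dg f z v)" for v
  proof -
    have "continuous_on X (\<lambda>z. czL (Dg Hi (h z)) * Dg h z v + czbL (Dg Hi (h z)) * cnj (Dg h z v))"
      unfolding czL_def czbL_def by (intro continuous_intros cDh cDHih) auto
    moreover have "Dg f z v = czL (Dg Hi (h z)) * Dg h z v + czbL (Dg Hi (h z)) * cnj (Dg h z v)"
      if "z \<in> X" for z
      using Dgf[OF that] lin_rep[OF linHi[OF hY[OF that]]] by simp
    ultimately show ?thesis by (rule cont_eqI)
  qed
  have meas: "(\<lambda>z. indicator X z * g z) \<in> borel_measurable borel" if "continuous_on X g" for g :: "complex \<Rightarrow> real"
    using borel_measurable_continuous_on_indicator[OF Xb that] by simp
  have Jne: "(cmod (wz f z))^2 - (cmod (wzbar f z))^2 \<noteq> 0" if "z \<in> X" for z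
    using jf[OF that] Jeq[OF that] by linarith
  have cF: "continuous_on X F"
    unfolding F_def hs_sq_def by (intro continuous_intros cPH cDH)
  have cP1: "continuous_on X P1"
  proof -
    have "continuous_on X (\<lambda>z. \<bar>jacL (Dg f z)\<bar> * (\<Phi> (h z) * hs_sq H (f z)))"
      unfolding jacL_def hs_sq_def by (intro continuous_intros cPh cDHf cDf)
    then show ?thesis by (rule cont_eqI) (simp add: P1_def F_def Hf)
  qed
  have cT2: "continuous_on X T2"
    unfolding T2_def wz_def wzbar_def
    by (intro continuous_intros cPh cDh cDf) (use Jne in \<open>simp_all add: wz_def wzbar_def\<close>)
  have cK: "continuous_on X K"
    unfolding K_def wz_def wzbar_def by (intro continuous_intros cPh cDh) auto
  have intF: "set_integrable lborel X F" using assms(10) by (simp add: finite_energy_def F_def[abs_def])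
  have intG: "set_integrable lborel X G" using assms(9) by (simp add: finite_energy_def G_def[abs_def])
  have derf: "(f has_derivative Dg f x) (at x within X)" if "x \<in> X" for x
    using df[OF that] by (rule has_derivative_at_withinI)
  have m1: "(\<lambda>z. indicator (f ` X) z * F z) \<in> borel_measurable borel"
    unfolding fXX by (rule meas[OF cF])
  have m2: "(\<lambda>z. indicator X z * (\<bar>jacL (Dg f z)\<bar> * F (f z))) \<in> borel_measurable borel"
    using meas[OF cP1] by (simp add: P1_def[abs_def])
  have intF': "set_integrable lborel (f ` X) F" using intF fXX by simp
  note cv = cov_complex[OF Xb derf injf m1 m2 intF']
  have intP1: "set_integrable lborel X P1" using cv(1) by (simp add: P1_def[abs_def])
  have EH: "energy \<Phi> X H = (LINT z:X|lborel. P1 z)"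
    using cv(2) fXX by (simp add: P1_def[abs_def] energy_def F_def[abs_def])
  have Eh: "energy \<Phi> X h = (LINT z:X|lborel. G z)" by (simp add: energy_def G_def[abs_def])
  have intD: "set_integrable lborel X (\<lambda>z. P1 z - G z)" using intP1 intG by (rule set_integral_diff(1))
  have sbm: "set_borel_measurable lborel X g" if "continuous_on X g" for g :: "complex \<Rightarrow> real"
    unfolding set_borel_measurable_def using meas[OF that] by simp
  have Phipos': "\<Phi> (h z) > 0" if "z \<in> X" for z using Phipos hY that by blast
  have KG: "norm (K z) \<le> norm (G z)" if z: "z \<in> X" for z
  proof -
    have "cmod (wz h z * wzbar h z) \<le> 2 * ((cmod (wz h z))^2 + (cmod (wzbar h z))^2)"
      unfolding norm_mult
      by (smt (verit) norm_ge_zero power2_eq_square mult_left_mono mult_right_mono sum_squares_bound)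
    then have "K z \<le> G z" "0 \<le> K z" using Phipos'[OF z] unfolding K_def G_def hsh[OF z]
      by (simp_all add: mult_left_mono)
    then show ?thesis by simp
  qed
  have intK: "set_integrable lborel X K"
    by (rule set_integrable_bound[OF intG sbm[OF cK]]) (use KG in auto)
  define Q where "Q z = (1/4) * (P1 z - G z) + K z" for z
  have intQ: "set_integrable lborel X Q"
    unfolding Q_def by (intro set_integral_add(1) set_integrable_mult_right intD intK)
  have T2Q: "norm (T2 z) \<le> norm (Q z)" if z: "z \<in> X" for z
  proof -
    have J0: "(cmod (wz f z))^2 - (cmod (wzbar f z))^2 > 0" using jf[OF z] Jeq[OF z] by simp
    have t2: "T2 z \<ge> 0" unfolding T2_def using J0 Phipos'[OF z]
      by (intro divide_nonneg_pos mult_nonneg_nonneg) auto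
    have "T1 z + K z = (cmod (wz f z - gam h z * wzbar f z))\<^sup>2 / ((cmod (wz f z))\<^sup>2 - (cmod (wzbar f z))\<^sup>2)
             * \<Phi> (h z) * cmod (wz h z * wzbar h z)"
      unfolding T1_def K_def by (simp add: algebra_simps)
    also have "\<dots> \<ge> 0" using J0 Phipos'[OF z]
      by (intro divide_nonneg_pos mult_nonneg_nonneg) auto
    finally have "T1 z + K z \<ge> 0" .
    moreover have "Q z = T1 z + K z + T2 z" unfolding Q_def using pw[OF z] by simp
    ultimately show ?thesis using t2 by simp
  qed
  have intT2: "set_integrable lborel X T2"
    by (rule set_integrable_bound[OF intQ sbm[OF cT2]]) (use T2Q in auto)
  have intT1: "set_integrable lborel X T1"
  proof -
    have "set_integrable lborel X (\<lambda>z. (1/4) * (P1 z - G z) - T2 z)"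
      by (intro set_integral_diff(1) set_integrable_mult_right intD intT2)
    moreover have "set_integrable lborel X (\<lambda>z. (1/4) * (P1 z - G z) - T2 z) = set_integrable lborel X T1"
      by (rule set_integrable_cong) (simp_all add: pw field_simps)
    ultimately show ?thesis by simp
  qed
  have "energy \<Phi> X H - energy \<Phi> X h = (LINT z:X|lborel. P1 z - G z)"
    unfolding EH Eh by (rule set_integral_diff(2)[OF intP1 intG, symmetric])
  also have "\<dots> = (LINT z:X|lborel. 4 * T1 z + 4 * T2 z)"
    by (rule set_lebesgue_integral_cong) (simp_all add: Xb pw)
  also have "\<dots> = 4 * (LINT z:X|lborel. T1 z) + 4 * (LINT z:X|lborel. T2 z)"
    using intT1 intT2 by (simp add: set_integral_add(2))
  finally show ?thesis using intT1 intT2 unfolding T1_def T2_def by simp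
qed

end
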